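(* Consider the $D_3$-action on $U(\mathfrak{sl}_2)$ by algebra automorphisms with $\sigma:(E,F,H)\mapsto(\mathbf iF,-\mathbf iE,-H)$ and $\tau:(E,F,H)\mapsto\big(\tfrac{H-\mathbf iE-\mathbf iF}{2},\tfrac{H+\mathbf iE+\mathbf iF}{2},\mathbf iE-\mathbf iF\big)$, and the $D_3$-action on $\Re$ by algebra automorphisms with $\sigma:(A,B,C,\Delta)\mapsto(C,B,A,-\Delta)$ and $\tau:(A,B,C,\Delta)\mapsto(B,C,A,\Delta)$. Then for every $g\in D_3$, $g\circ\sharp=\sharp\circ g$ as maps $\Re\to U(\mathfrak{sl}_2)$.
   Context: All algebras are unital associative over $\mathbb C$, $[x,y]=xy-yx$, $\mathbf i=\sqrt{-1}$. $U(\mathfrak{sl}_2)$ is generated by $E,F,H$ with $[H,E]=2E$, $[H,F]=-2F$, $[E,F]=H$. $\Re$ is generated by $A,B,C,\Delta$ with $[A,B]=[B,C]=[C,A]=2\Delta$ and such that $[A,\Delta]+AC-BA$, $[B,\Delta]+BA-CB$, $[C,\Delta]+CB-AC$ are central. $D_3=\langle\sigma,\tau\mid \sigma^2=\tau^3=(\sigma\tau)^2=1\rangle$ (both displayed actions are known to be well-defined group actions by algebra automorphisms). $\sharp:\Re\to U(\mathfrak{sl}_2)$ is the unique algebra homomorphism with $A\mapsto \frac{(E+F-2)(E+F+2)}{16}$, $B\mapsto\frac{(H-2)(H+2)}{16}$, $C\mapsto\frac{(\mathbf iE-\mathbf iF-2)(\mathbf iE-\mathbf iF+2)}{16}$, $\Delta\mapsto\frac{(H+2)F^2-(H-2)E^2}{64}$.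 *)

theory Defs
  imports Complex_Main
begin

text \<open>A noncommutative polynomial over C in letters of type 'g is a finitely
supported function from words ('g list) to complex coefficients.\<close>

type_synonym 'g ncp = "'g list \<Rightarrow> complex"

definition ncpoly :: "'g ncp \<Rightarrow> bool" where
  "ncpoly p \<longleftrightarrow> finite {w. p w \<noteq> 0}"

definition pconst :: "complex \<Rightarrow> 'g ncp" where
  "pconst c = (\<lambda>w. if w = [] then c else 0)"

definition pvar :: "'g \<Rightarrow> 'g ncp" where
  "pvar x = (\<lambda>w. if w = [x] then 1 else 0)"

definition padd :: "'g ncp \<Rightarrow> 'g ncp \<Rightarrow> 'g ncp" where
  "padd p q = (\<lambda>w. p w + q w)"

definition psub :: "'g ncp \<Rightarrow> 'g ncp \<Rightarrow> 'g ncp" where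
  "psub p q = (\<lambda>w. p w - q w)"

definition pscale :: "complex \<Rightarrow> 'g ncp \<Rightarrow> 'g ncp" where
  "pscale c p = (\<lambda>w. c * p w)"

definition pmul :: "'g ncp \<Rightarrow> 'g ncp \<Rightarrow> 'g ncp" where
  "pmul p q = (\<lambda>w. \<Sum>i\<le>length w. p (take i w) * q (drop i w))"

definition pcomm :: "'g ncp \<Rightarrow> 'g ncp \<Rightarrow> 'g ncp" where
  "pcomm p q = psub (pmul p q) (pmul q p)"

definition pprod :: "'g ncp list \<Rightarrow> 'g ncp" where
  "pprod ps = foldr pmul ps (pconst 1)"

definition psubst :: "('g \<Rightarrow> 'h ncp) \<Rightarrow> 'g ncp \<Rightarrow> 'h ncp" where
  "psubst \<phi> p = (\<lambda>v. \<Sum>w\<in>{w. p w \<noteq> 0}. p w * pprod (map \<phi> w) v)"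

inductive_set ideal_gen :: "'g ncp set \<Rightarrow> 'g ncp set" for R :: "'g ncp set" where
  zero: "pconst 0 \<in> ideal_gen R"
| gen: "r \<in> R \<Longrightarrow> r \<in> ideal_gen R"
| add: "p \<in> ideal_gen R \<Longrightarrow> q \<in> ideal_gen R \<Longrightarrow> padd p q \<in> ideal_gen R"
| scale: "p \<in> ideal_gen R \<Longrightarrow> pscale c p \<in> ideal_gen R"
| lmul: "p \<in> ideal_gen R \<Longrightarrow> ncpoly q \<Longrightarrow> pmul q p \<in> ideal_gen R"
| rmul: "p \<in> ideal_gen R \<Longrightarrow> ncpoly q \<Longrightarrow> pmul p q \<in> ideal_gen R"

datatype genU = gE | gF | gH

abbreviation "E \<equiv> pvar gE"
abbreviation "F \<equiv> pvar gF"
abbreviation "H \<equiv> pvar gH"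

definition relsU :: "genU ncp set" where
  "relsU = { psub (pcomm H E) (pscale 2 E),
             padd (pcomm H F) (pscale 2 F),
             psub (pcomm E F) H }"

definition idealU :: "genU ncp set" where
  "idealU = ideal_gen relsU"

datatype genR = gA | gB | gC | gD

abbreviation "Ar \<equiv> pvar gA"
abbreviation "Br \<equiv> pvar gB"
abbreviation "Cr \<equiv> pvar gC"
abbreviation "Dr \<equiv> pvar gD"

definition centR :: "genR ncp list" where
  "centR = [ psub (padd (pcomm Ar Dr) (pmul Ar Cr)) (pmul Br Ar),
             psub (padd (pcomm Br Dr) (pmul Br Ar)) (pmul Cr Br),
             psub (padd (pcomm Cr Dr) (pmul Cr Br)) (pmul Ar Cr) ]"

text \<open>Centrality of z in the quotient: z commutes with every generator
(equivalently with every element).\<close>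
definition relsR :: "genR ncp set" where
  "relsR = { psub (pcomm Ar Br) (pscale 2 Dr),
             psub (pcomm Br Cr) (pscale 2 Dr),
             psub (pcomm Cr Ar) (pscale 2 Dr) }
         \<union> { pcomm (pvar x) z | x z. z \<in> set centR }"

definition idealR :: "genR ncp set" where
  "idealR = ideal_gen relsR"

definition sharp_gen :: "genR \<Rightarrow> genU ncp" where
  "sharp_gen x = (case x of
      gA \<Rightarrow> pscale (1/16) (pmul (padd (padd E F) (pconst (-2))) (padd (padd E F) (pconst 2)))
    | gB \<Rightarrow> pscale (1/16) (pmul (padd H (pconst (-2))) (padd H (pconst 2)))
    | gC \<Rightarrow> pscale (1/16) (pmul (padd (psub (pscale \<i> E) (pscale \<i> F)) (pconst (-2)))
                                (padd (psub (pscale \<i> E) (pscale \<i> F)) (pconst 2)))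
    | gD \<Rightarrow> pscale (1/64) (psub (pmul (padd H (pconst 2)) (pmul F F))
                                (pmul (padd H (pconst (-2))) (pmul E E))))"

definition sharp :: "genR ncp \<Rightarrow> genU ncp" where
  "sharp = psubst sharp_gen"

datatype D3gen = sigma | tau

definition actU_gen :: "D3gen \<Rightarrow> genU \<Rightarrow> genU ncp" where
  "actU_gen g x = (case g of
      sigma \<Rightarrow> (case x of gE \<Rightarrow> pscale \<i> F | gF \<Rightarrow> pscale (-\<i>) E | gH \<Rightarrow> pscale (-1) H)
    | tau \<Rightarrow> (case x of
          gE \<Rightarrow> pscale (1/2) (psub (psub H (pscale \<i> E)) (pscale \<i> F))
        | gF \<Rightarrow> pscale (1/2) (padd (padd H (pscale \<i> E)) (pscale \<i> F))
        | gH \<Rightarrow> psub (pscale \<i> E) (pscale \<i> F)))"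

definition actR_gen :: "D3gen \<Rightarrow> genR \<Rightarrow> genR ncp" where
  "actR_gen g x = (case g of
      sigma \<Rightarrow> (case x of gA \<Rightarrow> Cr | gB \<Rightarrow> Br | gC \<Rightarrow> Ar | gD \<Rightarrow> pscale (-1) Dr)
    | tau \<Rightarrow> (case x of gA \<Rightarrow> Br | gB \<Rightarrow> Cr | gC \<Rightarrow> Ar | gD \<Rightarrow> Dr))"

text \<open>An element of D3 is a word in the generators sigma, tau; it acts as the
composite of the generator actions.\<close>
fun actU :: "D3gen list \<Rightarrow> genU ncp \<Rightarrow> genU ncp" where
  "actU [] p = p"
| "actU (g # gs) p = psubst (actU_gen g) (actU gs p)"

fun actR :: "D3gen list \<Rightarrow> genR ncp \<Rightarrow> genR ncp" where
  "actR [] p = p"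
| "actR (g # gs) p = psubst (actR_gen g) (actR gs p)"

end

theory Submission
  imports Defs
begin

definition supp :: "'g ncp \<Rightarrow> 'g list set" where "supp p = {w. p w \<noteq> 0}"
definition mon :: "'g list \<Rightarrow> 'g ncp" where "mon u = (\<lambda>w. if w = u then 1 else 0)"
definition fsum :: "'a set \<Rightarrow> ('a \<Rightarrow> 'g ncp) \<Rightarrow> 'g ncp" where
  "fsum S g = (\<lambda>v. \<Sum>s\<in>S. g s v)"

lemma pmul_Nil[simp]: "pmul p q [] = p [] * q []"
  by (simp add: pmul_def)

lemma pmul_Cons: "pmul p q (x#w) = p [] * q (x#w) + pmul (\<lambda>u. p (x#u)) q w"
  unfolding pmul_def by (simp add: sum.atMost_Suc_shift del: sum.atMost_Suc)

lemma pmul_padd_left: "pmul (padd p p') q = padd (pmul p q) (pmul p' q)"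
  by (simp add: pmul_def padd_def fun_eq_iff sum.distrib distrib_right)
lemma pmul_padd_right: "pmul q (padd p p') = padd (pmul q p) (pmul q p')"
  by (simp add: pmul_def padd_def fun_eq_iff sum.distrib distrib_left)
lemma pmul_psub_left: "pmul (psub p p') q = psub (pmul p q) (pmul p' q)"
  by (simp add: pmul_def psub_def fun_eq_iff sum_subtractf left_diff_distrib)
lemma pmul_psub_right: "pmul q (psub p p') = psub (pmul q p) (pmul q p')"
  by (simp add: pmul_def psub_def fun_eq_iff sum_subtractf right_diff_distrib)
lemma pmul_pscale_left: "pmul (pscale c p) q = pscale c (pmul p q)"
  by (simp add: pmul_def pscale_def fun_eq_iff sum_distrib_left mult.assoc)
lemma pmul_pscale_right: "pmul q (pscale c p) = pscale c (pmul q p)"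
  by (simp add: pmul_def pscale_def fun_eq_iff sum_distrib_left mult.left_commute)

lemma pmul_assoc_pt: "pmul (pmul p q) r w = pmul p (pmul q r) w"
proof (induction w arbitrary: p)
  case Nil then show ?case by simp
next
  case (Cons x w)
  have e: "(\<lambda>u. pmul p q (x#u)) = padd (pscale (p []) (\<lambda>u. q (x#u))) (pmul (\<lambda>u. p (x#u)) q)"
    by (simp add: fun_eq_iff pmul_Cons padd_def pscale_def)
  have "pmul (pmul p q) r (x#w) = p [] * q [] * r (x#w) + pmul (\<lambda>u. pmul p q (x#u)) r w"
    by (simp add: pmul_Cons)
  also have "pmul (\<lambda>u. pmul p q (x#u)) r w = p [] * pmul (\<lambda>u. q (x#u)) r w + pmul (pmul (\<lambda>u. p (x#u)) q) r w"
    by (simp only: e pmul_padd_left pmul_pscale_left) (simp add: padd_def pscale_def)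
  also have "pmul (pmul (\<lambda>u. p (x#u)) q) r w = pmul (\<lambda>u. p (x#u)) (pmul q r) w" by (rule Cons.IH)
  finally show ?case by (simp add: pmul_Cons distrib_left mult.assoc)
qed

lemma pmul_assoc: "pmul (pmul p q) r = pmul p (pmul q r)"
  using pmul_assoc_pt by blast

lemma pmul_pconst_left: "pmul (pconst c) p = pscale c p"
proof -
  have "pmul (pconst c) p w = c * p w" for w
  proof (cases w)
    case Nil then show ?thesis by (simp add: pconst_def)
  next
    case (Cons x w')
    have "(\<lambda>u. pconst c (x#u)) = pconst 0" by (simp add: pconst_def fun_eq_iff)
    moreover have "pmul (pconst 0) p w' = 0" by (simp add: pmul_def pconst_def)
    ultimately show ?thesis using Cons by (simp add: pmul_Cons pconst_def)
  qed
  then show ?thesis by (simp add: fun_eq_iff pscale_def)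
qed

lemma pmul_pconst_right_pt: "pmul p (pconst c) w = c * p w"
proof (induction w arbitrary: p)
  case Nil then show ?case by (simp add: pconst_def)
next
  case (Cons x w) then show ?case by (simp add: pmul_Cons pconst_def)
qed

lemma pmul_pconst_right: "pmul p (pconst c) = pscale c p"
  by (simp add: fun_eq_iff pscale_def pmul_pconst_right_pt)

lemma pmul_mono_pt: "pmul (mon u) q w = (if take (length u) w = u then q (drop (length u) w) else 0)"
proof (induction u arbitrary: w)
  case Nil
  have "mon [] = pconst 1" unfolding mon_def pconst_def by (simp add: mon_def pconst_def fun_eq_iff)
  then have "pmul (mon []) q w = q w" using pmul_pconst_left[of 1 q] by (metis mult_1_left pscale_def)
  then show ?case by simp
next
  case (Cons a u)
  show ?case
  proof (cases w)
    case Nil then show ?thesis by (simp add: mon_def)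
  next
    case (Cons x w')
    have "(\<lambda>t. mon (a#u) (x#t)) = (if x = a then mon u else pconst 0)"
      by (auto simp: mon_def pconst_def fun_eq_iff)
    moreover have "pmul (pconst 0) q w' = 0" by (simp add: pmul_def pconst_def)
    ultimately show ?thesis using Cons.IH Cons by (simp add: pmul_Cons mon_def)
  qed
qed

lemma pmul_mono: "pmul (mon u) (mon v) = mon (u @ v)"
proof -
  have "pmul (mon u) (mon v) w = mon (u@v) w" for w
    unfolding pmul_mono_pt by (auto simp: mon_def dest: sym) (metis append_take_drop_id)
  then show ?thesis by blast
qed

lemma ncpoly_supp: "ncpoly p \<longleftrightarrow> finite (supp p)" by (simp add: ncpoly_def supp_def)

lemma ncpoly_pconst[simp]: "ncpoly (pconst c)"
  unfolding ncpoly_def pconst_def by (rule finite_subset[of _ "{[]}"]) auto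
lemma ncpoly_pvar[simp]: "ncpoly (pvar x)"
  unfolding ncpoly_def pvar_def by (rule finite_subset[of _ "{[x]}"]) auto
lemma ncpoly_mon[simp]: "ncpoly (mon u)"
  unfolding ncpoly_def mon_def by (rule finite_subset[of _ "{u}"]) auto
lemma ncpoly_padd[simp]: "ncpoly p \<Longrightarrow> ncpoly q \<Longrightarrow> ncpoly (padd p q)"
  unfolding ncpoly_def padd_def by (rule finite_subset[of _ "{w. p w \<noteq> 0} \<union> {w. q w \<noteq> 0}"]) auto
lemma ncpoly_psub[simp]: "ncpoly p \<Longrightarrow> ncpoly q \<Longrightarrow> ncpoly (psub p q)"
  unfolding ncpoly_def psub_def by (rule finite_subset[of _ "{w. p w \<noteq> 0} \<union> {w. q w \<noteq> 0}"]) auto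
lemma ncpoly_pscale[simp]: "ncpoly p \<Longrightarrow> ncpoly (pscale c p)"
  unfolding ncpoly_def pscale_def by (rule finite_subset[of _ "{w. p w \<noteq> 0}"]) auto

lemma supp_pmul: "supp (pmul p q) \<subseteq> (\<lambda>(u,v). u @ v) ` (supp p \<times> supp q)"
proof
  fix w assume "w \<in> supp (pmul p q)"
  then have "(\<Sum>i\<le>length w. p (take i w) * q (drop i w)) \<noteq> 0" by (simp add: supp_def pmul_def)
  then obtain i where "p (take i w) * q (drop i w) \<noteq> 0"
    using sum.not_neutral_contains_not_neutral by blast
  then show "w \<in> (\<lambda>(u,v). u @ v) ` (supp p \<times> supp q)"
    by (auto simp: supp_def image_iff) (metis append_take_drop_id)
qed

lemma ncpoly_pmul[simp]: "ncpoly p \<Longrightarrow> ncpoly q \<Longrightarrow> ncpoly (pmul p q)"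
  unfolding ncpoly_supp using supp_pmul by (metis finite_SigmaI finite_imageI finite_subset)

lemma supp_fsum: "supp (fsum S g) \<subseteq> (\<Union>s\<in>S. supp (g s))"
proof
  fix w assume "w \<in> supp (fsum S g)"
  then have "(\<Sum>s\<in>S. g s w) \<noteq> 0" by (simp add: supp_def fsum_def)
  then obtain s where "s \<in> S" "g s w \<noteq> 0" using sum.not_neutral_contains_not_neutral by blast
  then show "w \<in> (\<Union>s\<in>S. supp (g s))" by (auto simp: supp_def)
qed

lemma ncpoly_fsum[simp]: "finite S \<Longrightarrow> (\<And>s. s \<in> S \<Longrightarrow> ncpoly (g s)) \<Longrightarrow> ncpoly (fsum S g)"
  unfolding ncpoly_supp using supp_fsum by (metis (no_types, lifting) finite_UN_I finite_subset)

lemma pprod_Nil[simp]: "pprod [] = pconst 1" by (simp add: pprod_def)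
lemma pprod_Cons[simp]: "pprod (x # xs) = pmul x (pprod xs)" by (simp add: pprod_def)

lemma ncpoly_pprod[simp]: "(\<And>x. x \<in> set xs \<Longrightarrow> ncpoly x) \<Longrightarrow> ncpoly (pprod xs)"
  by (induction xs) auto

lemma psubst_fsum: "psubst \<phi> p = fsum (supp p) (\<lambda>w. pscale (p w) (pprod (map \<phi> w)))"
  by (simp add: psubst_def fsum_def pscale_def supp_def)

lemma ncpoly_psubst[simp]: "ncpoly p \<Longrightarrow> (\<And>x. ncpoly (\<phi> x)) \<Longrightarrow> ncpoly (psubst \<phi> p)"
  unfolding psubst_fsum by (intro ncpoly_fsum ncpoly_pscale ncpoly_pprod) (auto simp: ncpoly_supp[symmetric])

lemma ncpoly_expand: "ncpoly p \<Longrightarrow> p = fsum (supp p) (\<lambda>u. pscale (p u) (mon u))"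
proof -
  assume p: "ncpoly p"
  have "(\<Sum>u\<in>supp p. p u * (if w = u then 1 else 0)) = p w" for w
  proof (cases "w \<in> supp p")
    case True
    have "(\<Sum>u\<in>supp p. p u * (if w = u then 1 else 0)) = (\<Sum>u\<in>supp p. if u = w then p w else 0)"
      by (rule sum.cong) auto
    then show ?thesis using True p by (simp add: ncpoly_supp)
  next
    case False
    then have "(\<Sum>u\<in>supp p. p u * (if w = u then 1 else 0)) = 0" by (intro sum.neutral) auto
    then show ?thesis using False by (simp add: supp_def)
  qed
  then show ?thesis by (simp add: fun_eq_iff fsum_def pscale_def mon_def)
qed

lemma pmul_fsum_left: "pmul (fsum S g) q = fsum S (\<lambda>s. pmul (g s) q)"
  by (simp add: fun_eq_iff pmul_def fsum_def sum_distrib_right sum.swap[of _ S])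
lemma pmul_fsum_right: "pmul q (fsum S g) = fsum S (\<lambda>s. pmul q (g s))"
  by (simp add: fun_eq_iff pmul_def fsum_def sum_distrib_left sum.swap[of _ S])

lemma fsum_empty[simp]: "fsum {} g = pconst 0"
  by (simp add: fun_eq_iff fsum_def pconst_def)
lemma fsum_insert: "finite S \<Longrightarrow> s \<notin> S \<Longrightarrow> fsum (insert s S) g = padd (g s) (fsum S g)"
  by (simp add: fun_eq_iff fsum_def padd_def)

lemma ideal_ncpoly: assumes "\<And>r. r \<in> R \<Longrightarrow> ncpoly r" shows "p \<in> ideal_gen R \<Longrightarrow> ncpoly p"
  by (induction rule: ideal_gen.induct) (auto simp: assms)

lemma ideal_psub: "p \<in> ideal_gen R \<Longrightarrow> q \<in> ideal_gen R \<Longrightarrow> psub p q \<in> ideal_gen R"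
proof -
  assume "p \<in> ideal_gen R" "q \<in> ideal_gen R"
  then have "padd p (pscale (-1) q) \<in> ideal_gen R" by (intro ideal_gen.add ideal_gen.scale)
  moreover have "padd p (pscale (-1) q) = psub p q" by (simp add: fun_eq_iff padd_def pscale_def psub_def)
  ultimately show ?thesis by simp
qed

lemma psub_self: "psub p p = pconst 0" by (simp add: fun_eq_iff psub_def pconst_def)

lemma relsU_ncpoly: "r \<in> relsU \<Longrightarrow> ncpoly r"
  by (auto simp: relsU_def pcomm_def)

lemma idealU_ncpoly: "p \<in> idealU \<Longrightarrow> ncpoly p"
  unfolding idealU_def using ideal_ncpoly relsU_ncpoly by blast

definition ueq :: "genU ncp \<Rightarrow> genU ncp \<Rightarrow> bool" where
  "ueq p q \<longleftrightarrow> ncpoly p \<and> ncpoly q \<and> psub p q \<in> idealU"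

lemma idealU_add: "p \<in> idealU \<Longrightarrow> q \<in> idealU \<Longrightarrow> padd p q \<in> idealU"
  unfolding idealU_def by (rule ideal_gen.add)
lemma idealU_scale: "p \<in> idealU \<Longrightarrow> pscale c p \<in> idealU"
  unfolding idealU_def by (rule ideal_gen.scale)
lemma idealU_lmul: "p \<in> idealU \<Longrightarrow> ncpoly q \<Longrightarrow> pmul q p \<in> idealU"
  unfolding idealU_def by (rule ideal_gen.lmul)
lemma idealU_rmul: "p \<in> idealU \<Longrightarrow> ncpoly q \<Longrightarrow> pmul p q \<in> idealU"
  unfolding idealU_def by (rule ideal_gen.rmul)
lemma idealU_zero: "pconst 0 \<in> idealU"
  unfolding idealU_def by (rule ideal_gen.zero)
lemma idealU_psub: "p \<in> idealU \<Longrightarrow> q \<in> idealU \<Longrightarrow> psub p q \<in> idealU"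
  unfolding idealU_def by (rule ideal_psub)

lemma ueq_refl: "ncpoly p \<Longrightarrow> ueq p p"
  by (simp add: ueq_def psub_self idealU_zero)

lemma ueq_eqI: "p = q \<Longrightarrow> ncpoly p \<Longrightarrow> ueq p q"
  by (simp add: ueq_refl)

lemma ueq_self[simp]: "ueq p p = ncpoly p"
  by (auto simp: ueq_refl) (simp add: ueq_def)

lemma idealU_Nil: "p \<in> idealU \<Longrightarrow> p [] = 0"
proof -
  have "p \<in> ideal_gen relsU \<Longrightarrow> p [] = 0" for p
    by (induction rule: ideal_gen.induct)
      (auto simp: relsU_def pconst_def padd_def pscale_def psub_def pcomm_def pvar_def)
  then show "p \<in> idealU \<Longrightarrow> p [] = 0" by (simp add: idealU_def)
qed

lemma padd_assoc: "padd (padd a b) c = padd a (padd b c)" by (simp add: fun_eq_iff padd_def ac_simps)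
lemma padd_comm: "padd a b = padd b a" by (simp add: fun_eq_iff padd_def ac_simps)
lemma padd_zero: "padd (pconst 0) a = a" by (simp add: fun_eq_iff padd_def pconst_def)
lemma padd_neg: "padd (pscale (-1) a) a = pconst 0" by (simp add: fun_eq_iff padd_def pconst_def pscale_def)
lemma psub_padd: "psub a b = padd a (pscale (-1) b)" by (simp add: fun_eq_iff padd_def psub_def pscale_def)
lemma pmul_one_left: "pmul (pconst 1) a = a" by (simp add: pmul_pconst_left fun_eq_iff pscale_def)
lemma pmul_one_right: "pmul a (pconst 1) = a" by (simp add: pmul_pconst_right fun_eq_iff pscale_def)


lemma part_equivp_ueq: "part_equivp ueq"
proof (rule part_equivpI)
  show "\<exists>x. ueq x x" using ueq_refl ncpoly_pconst by blast
  show "symp ueq"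
  proof (rule sympI)
    fix p q assume "ueq p q"
    then have "psub q p = pscale (-1) (psub p q)" "psub p q \<in> idealU" "ncpoly p" "ncpoly q"
      by (auto simp: fun_eq_iff psub_def pscale_def ueq_def)
    then show "ueq q p" by (simp add: ueq_def idealU_scale)
  qed
  show "transp ueq"
  proof (rule transpI)
    fix p q r assume "ueq p q" "ueq q r"
    then have "psub p r = padd (psub p q) (psub q r)" "psub p q \<in> idealU" "psub q r \<in> idealU" "ncpoly p" "ncpoly r"
      by (auto simp: fun_eq_iff psub_def padd_def ueq_def)
    then show "ueq p r" by (simp add: ueq_def idealU_add)
  qed
qed

quotient_type U = "genU ncp" / partial: ueq
  morphisms repU absU
  by (rule part_equivp_ueq)

instantiation U :: ring_1
begin
lift_definition zero_U :: U is "pconst 0" by (simp add: ueq_refl)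
lift_definition one_U :: U is "pconst 1" by (simp add: ueq_refl)
lift_definition plus_U :: "U \<Rightarrow> U \<Rightarrow> U" is padd
proof -
  fix p p' q q' assume "ueq p p'" "ueq q q'"
  then have "psub (padd p q) (padd p' q') = padd (psub p p') (psub q q')" "psub p p' \<in> idealU" "psub q q' \<in> idealU"
    "ncpoly p" "ncpoly p'" "ncpoly q" "ncpoly q'"
    by (auto simp: fun_eq_iff psub_def padd_def ueq_def)
  then show "ueq (padd p q) (padd p' q')" by (simp add: ueq_def idealU_add)
qed
lift_definition uminus_U :: "U \<Rightarrow> U" is "pscale (-1)"
proof -
  fix p p' assume "ueq p p'"
  then have "psub (pscale (-1) p) (pscale (-1) p') = pscale (-1) (psub p p')" "psub p p' \<in> idealU"
    "ncpoly p" "ncpoly p'"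
    by (auto simp: fun_eq_iff psub_def pscale_def ueq_def algebra_simps)
  then show "ueq (pscale (-1) p) (pscale (-1) p')" by (simp add: ueq_def idealU_scale)
qed
lift_definition minus_U :: "U \<Rightarrow> U \<Rightarrow> U" is psub
proof -
  fix p p' q q' assume "ueq p p'" "ueq q q'"
  then have "psub (psub p q) (psub p' q') = psub (psub p p') (psub q q')" "psub p p' \<in> idealU" "psub q q' \<in> idealU"
    "ncpoly p" "ncpoly p'" "ncpoly q" "ncpoly q'"
    by (auto simp: fun_eq_iff psub_def ueq_def)
  then show "ueq (psub p q) (psub p' q')" by (simp add: ueq_def idealU_psub)
qed
lift_definition times_U :: "U \<Rightarrow> U \<Rightarrow> U" is pmul
proof -
  fix p p' q q' assume "ueq p p'" "ueq q q'"
  then have "psub (pmul p q) (pmul p' q') = padd (pmul (psub p p') q) (pmul p' (psub q q'))" "psub p p' \<in> idealU" "psub q q' \<in> idealU"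
    "ncpoly p" "ncpoly p'" "ncpoly q" "ncpoly q'"
    by (auto simp: ueq_def pmul_psub_left pmul_psub_right) (simp add: fun_eq_iff psub_def padd_def)
  then show "ueq (pmul p q) (pmul p' q')" by (simp add: ueq_def idealU_add idealU_lmul idealU_rmul)
qed
instance
proof
  fix a b c :: U
  show "a + b + c = a + (b + c)"
    by transfer (simp add: padd_assoc)
  show "a + b = b + a"
    by transfer (simp add: padd_comm ueq_refl)
  show "0 + a = a"
    by transfer (simp add: padd_zero)
  show "- a + a = 0"
    by transfer (simp add: padd_neg)
  show "a - b = a + - b"
    by transfer (simp add: psub_padd)
  show "a * b * c = a * (b * c)"
    by transfer (simp add: pmul_assoc)
  show "1 * a = a"
    by transfer (simp add: pmul_one_left)
  show "a * 1 = a"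
    by transfer (simp add: pmul_one_right)
  show "(a + b) * c = a * c + b * c"
    by transfer (simp add: pmul_padd_left)
  show "a * (b + c) = a * b + a * c"
    by transfer (simp add: pmul_padd_right)
  show "(0::U) \<noteq> 1"
    by transfer (auto simp: ueq_def dest!: idealU_Nil simp: psub_def pconst_def)
qed
end

lift_definition cs :: "complex \<Rightarrow> U" is pconst by simp
lemma cs_eq: "cs c = absU (pconst c)" by (simp add: cs.abs_eq)

lemma absU_padd: "ncpoly p \<Longrightarrow> ncpoly q \<Longrightarrow> absU (padd p q) = absU p + absU q"
  by (simp add: plus_U.abs_eq eq_onp_def)
lemma absU_psub: "ncpoly p \<Longrightarrow> ncpoly q \<Longrightarrow> absU (psub p q) = absU p - absU q"
  by (simp add: minus_U.abs_eq eq_onp_def)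
lemma absU_pmul: "ncpoly p \<Longrightarrow> ncpoly q \<Longrightarrow> absU (pmul p q) = absU p * absU q"
  by (simp add: times_U.abs_eq eq_onp_def)
lemma absU_pscale: "ncpoly p \<Longrightarrow> absU (pscale c p) = cs c * absU p"
  by (simp add: cs_eq absU_pmul flip: pmul_pconst_left)
lemma absU_pconst: "absU (pconst c) = cs c" by (simp add: cs_eq)

lemma cs_0[simp]: "cs 0 = 0" by (simp add: cs_eq zero_U_def)
lemma cs_1[simp]: "cs 1 = 1" by (simp add: cs_eq one_U_def)
lemma cs_mult: "cs (a * b) = cs a * cs b"
proof -
  have "pconst (a*b) = pmul (pconst a) (pconst b)"
    by (simp add: pmul_pconst_left) (simp add: fun_eq_iff pscale_def pconst_def)
  note e = this
  show ?thesis unfolding cs_eq by (subst e) (rule absU_pmul; simp)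
qed
lemma cs_add: "cs (a + b) = cs a + cs b"
proof -
  have "pconst (a+b) = padd (pconst a) (pconst b)"
    by (simp add: fun_eq_iff padd_def pconst_def)
  note e = this
  show ?thesis unfolding cs_eq by (subst e) (rule absU_padd; simp)
qed
lemma cs_diff: "cs (a - b) = cs a - cs b"
proof -
  have "pconst (a-b) = psub (pconst a) (pconst b)"
    by (simp add: fun_eq_iff psub_def pconst_def)
  note e = this
  show ?thesis unfolding cs_eq by (subst e) (rule absU_psub; simp)
qed
lemma cs_uminus: "cs (- a) = - cs a" using cs_diff[of 0 a] by simp
lemma cs_of_nat: "cs (of_nat n) = of_nat n"
  by (induction n) (simp_all add: cs_add)
lemma cs_numeral[simp]: "cs (numeral n) = numeral n"
  using cs_of_nat[of "numeral n"] by simp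
lemma cs_central: "cs c * x = x * cs c"
  by transfer (simp add: pmul_pconst_left pmul_pconst_right)
lemma cs_left_commute: "cs a * (cs b * x) = cs b * (cs a * x)"
  by (simp add: mult.assoc[symmetric] cs_mult[symmetric] mult.commute)

lemma absU_eq_iff: "ncpoly p \<Longrightarrow> ncpoly q \<Longrightarrow> absU p = absU q \<longleftrightarrow> psub p q \<in> idealU"
  using Quotient3_rel[OF Quotient3_U, of p q] by (auto simp: ueq_def)

lemma absU_fsum: "finite S \<Longrightarrow> (\<And>s. s \<in> S \<Longrightarrow> ncpoly (g s)) \<Longrightarrow> absU (fsum S g) = (\<Sum>s\<in>S. absU (g s))"
  by (induction S rule: finite_induct) (simp_all add: fsum_insert absU_padd absU_pconst)

lemma absU_pprod: "(\<And>x. x \<in> set xs \<Longrightarrow> ncpoly x) \<Longrightarrow> absU (pprod xs) = prod_list (map absU xs)"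
  by (induction xs) (simp_all add: absU_pconst absU_pmul)

definition evU :: "('g \<Rightarrow> U) \<Rightarrow> 'g ncp \<Rightarrow> U" where
  "evU f p = (\<Sum>w\<in>supp p. cs (p w) * prod_list (map f w))"

lemma absU_psubst: "ncpoly p \<Longrightarrow> (\<And>x. ncpoly (\<phi> x)) \<Longrightarrow> absU (psubst \<phi> p) = evU (\<lambda>x. absU (\<phi> x)) p"
proof -
  assume p: "ncpoly p" and ph: "\<And>x. ncpoly (\<phi> x)"
  have n: "ncpoly (pprod (map \<phi> w))" for w by (rule ncpoly_pprod) (auto simp: ph)
  have n2: "absU (pprod (map \<phi> w)) = prod_list (map (\<lambda>x. absU (\<phi> x)) w)" for w
    by (subst absU_pprod) (auto simp: ph o_def)
  show ?thesis using p unfolding psubst_fsum evU_def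
    by (subst absU_fsum) (auto simp: ncpoly_supp[symmetric] n absU_pscale n2)
qed

lemma evU_eq_sum: "finite W \<Longrightarrow> supp p \<subseteq> W \<Longrightarrow> evU f p = (\<Sum>w\<in>W. cs (p w) * prod_list (map f w))"
  unfolding evU_def by (rule sum.mono_neutral_left) (auto simp: supp_def)

lemma evU_padd: "ncpoly p \<Longrightarrow> ncpoly q \<Longrightarrow> evU f (padd p q) = evU f p + evU f q"
proof -
  assume p: "ncpoly p" and q: "ncpoly q"
  let ?W = "supp p \<union> supp q"
  have fW: "finite ?W" using p q by (simp add: ncpoly_supp)
  have "supp (padd p q) \<subseteq> ?W" by (auto simp: supp_def padd_def)
  then show ?thesis using fW
    by (simp add: evU_eq_sum[of ?W] padd_def cs_add distrib_right sum.distrib)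
qed

lemma evU_pscale: "ncpoly p \<Longrightarrow> evU f (pscale c p) = cs c * evU f p"
proof -
  assume p: "ncpoly p"
  have "supp (pscale c p) \<subseteq> supp p" by (auto simp: supp_def pscale_def)
  then show ?thesis using p
    by (simp add: evU_eq_sum[of "supp p"] ncpoly_supp pscale_def cs_mult sum_distrib_left mult.assoc)
qed

lemma evU_psub: "ncpoly p \<Longrightarrow> ncpoly q \<Longrightarrow> evU f (psub p q) = evU f p - evU f q"
proof -
  assume p: "ncpoly p" and q: "ncpoly q"
  have "psub p q = padd p (pscale (-1) q)" by (simp add: psub_padd)
  then show ?thesis using p q by (simp add: evU_padd evU_pscale cs_uminus)
qed

lemma evU_pconst: "evU f (pconst c) = cs c"
  by (subst evU_eq_sum[of "{[]}"]) (auto simp: supp_def pconst_def)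
lemma evU_pvar: "evU f (pvar x) = f x"
  by (subst evU_eq_sum[of "{[x]}"]) (auto simp: supp_def pvar_def)
lemma evU_mon: "evU f (mon u) = prod_list (map f u)"
  by (subst evU_eq_sum[of "{u}"]) (auto simp: supp_def mon_def)

lemma evU_fsum: "finite S \<Longrightarrow> (\<And>s. s \<in> S \<Longrightarrow> ncpoly (g s)) \<Longrightarrow> evU f (fsum S g) = (\<Sum>s\<in>S. evU f (g s))"
  by (induction S rule: finite_induct) (simp_all add: fsum_insert evU_padd evU_pconst)

lemma evU_pmul: "ncpoly p \<Longrightarrow> ncpoly q \<Longrightarrow> evU f (pmul p q) = evU f p * evU f q"
proof -
  assume p: "ncpoly p" and q: "ncpoly q"
  let ?M = "\<lambda>w. prod_list (map f w)"
  have fp: "finite (supp p)" and fq: "finite (supp q)" using p q by (simp_all add: ncpoly_supp)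
  have "pmul p q = fsum (supp p) (\<lambda>u. fsum (supp q) (\<lambda>v. pmul (pscale (p u) (mon u)) (pscale (q v) (mon v))))"
    apply (subst ncpoly_expand[OF p])
    apply (subst ncpoly_expand[OF q])
    apply (subst pmul_fsum_left)
    apply (subst pmul_fsum_right)
    by (simp add: pmul_fsum_right)
  then have "evU f (pmul p q) = (\<Sum>u\<in>supp p. \<Sum>v\<in>supp q. cs (p u) * (cs (q v) * ?M (u @ v)))"
    using fp fq
    by (simp add: evU_fsum pmul_pscale_left pmul_pscale_right pmul_mono evU_pscale evU_mon cs_left_commute)
  also have "\<dots> = (\<Sum>u\<in>supp p. \<Sum>v\<in>supp q. cs (p u) * ?M u * (cs (q v) * ?M v))"
  proof (intro sum.cong refl)
    fix u v
    have "cs (p u) * ?M u * (cs (q v) * ?M v) = cs (p u) * ((?M u * cs (q v)) * ?M v)"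
      by (simp add: mult.assoc)
    also have "\<dots> = cs (p u) * (cs (q v) * (?M u * ?M v))"
      by (subst cs_central[of "q v" "?M u", symmetric]) (simp add: mult.assoc)
    finally show "cs (p u) * (cs (q v) * ?M (u @ v)) = cs (p u) * ?M u * (cs (q v) * ?M v)"
      by simp
  qed
  also have "\<dots> = evU f p * evU f q"
    by (simp add: evU_def sum_product)
  finally show ?thesis .
qed

lemma evU_pprod: "(\<And>x. x \<in> set xs \<Longrightarrow> ncpoly x) \<Longrightarrow> evU f (pprod xs) = prod_list (map (evU f) xs)"
  by (induction xs) (simp_all add: evU_pconst evU_pmul)

lemma evU_psubst: "ncpoly q \<Longrightarrow> (\<And>x. ncpoly (\<psi> x)) \<Longrightarrow> evU f (psubst \<psi> q) = evU (\<lambda>x. evU f (\<psi> x)) q"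
proof -
  assume q: "ncpoly q" and ps: "\<And>x. ncpoly (\<psi> x)"
  have n: "ncpoly (pprod (map \<psi> w))" for w by (rule ncpoly_pprod) (auto simp: ps)
  have n2: "evU f (pprod (map \<psi> w)) = prod_list (map (\<lambda>x. evU f (\<psi> x)) w)" for w
    by (subst evU_pprod) (auto simp: ps o_def)
  have "evU f (psubst \<psi> q) = (\<Sum>s\<in>supp q. cs (q s) * prod_list (map (\<lambda>x. evU f (\<psi> x)) s))"
    using q unfolding psubst_fsum
    by (subst evU_fsum) (auto simp: ncpoly_supp[symmetric] n evU_pscale n2)
  then show ?thesis by (simp only: evU_def[of _ q])
qed

lemma evU_ideal:
  assumes "\<And>r. r \<in> relsU \<Longrightarrow> evU f r = 0"
  shows "p \<in> idealU \<Longrightarrow> evU f p = 0"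
proof -
  have "p \<in> ideal_gen relsU \<Longrightarrow> evU f p = 0 \<and> ncpoly p" for p
    by (induction rule: ideal_gen.induct)
      (auto simp: assms relsU_ncpoly evU_pconst evU_padd evU_pscale evU_pmul)
  then show "p \<in> idealU \<Longrightarrow> evU f p = 0" by (simp add: idealU_def)
qed

lemma evU_respect:
  assumes "\<And>r. r \<in> relsU \<Longrightarrow> evU f r = 0" "ncpoly p" "ncpoly q" "absU p = absU q"
  shows "evU f p = evU f q"
proof -
  have "psub p q \<in> idealU" using assms absU_eq_iff by blast
  then have "evU f (psub p q) = 0" using evU_ideal assms(1) by blast
  then show ?thesis using assms by (simp add: evU_psub)
qed

locale sl2r =
  fixes e f h i c :: "'a::ring_1"
  assumes ii: "i * i = -1"
    and ie: "e * i = i * e" and iF: "f * i = i * f" and ih: "h * i = i * h"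
    and he: "h * e = e * h + 2 * e" and fe: "f * e = e * f - h" and fh: "f * h = h * f + 2 * f"
    and cc: "\<And>x. c * x = x * c" and c2: "c + c = 1"
begin

lemma ie': "e * (i * y) = i * (e * y)" by (metis ie mult.assoc)
lemma if': "f * (i * y) = i * (f * y)" by (metis iF mult.assoc)
lemma ih': "h * (i * y) = i * (h * y)" by (metis ih mult.assoc)
lemma ii': "i * (i * y) = - y" by (metis ii mult.assoc mult_minus1)
lemma he': "h * (e * y) = e * (h * y) + 2 * (e * y)" by (metis he mult.assoc distrib_right)
lemma fe': "f * (e * y) = e * (f * y) - h * y" by (metis fe mult.assoc left_diff_distrib)
lemma fh': "f * (h * y) = h * (f * y) + 2 * (f * y)" by (metis fh mult.assoc distrib_right)
lemma ce: "e * c = c * e" "f * c = c * f" "h * c = c * h" "i * c = c * i" using cc by metis+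
lemma ce': "e * (c * y) = c * (e * y)" "f * (c * y) = c * (f * y)" "h * (c * y) = c * (h * y)"
  "i * (c * y) = c * (i * y)" using cc by (metis mult.assoc)+
lemma cadd: "c * x + c * x = x" "c * x + (c * x + y) = x + y"
  by (metis c2 distrib_right mult_1) (metis c2 distrib_right mult_1 add.assoc)

lemmas ns = algebra_simps mult_2 mult_2_right ii ii' ie ie' iF if' ih ih' he he' fe fe' fh fh' ce ce' cadd

lemma sA: "(i*f - i*e - 2) * (i*f - i*e + 2) = (i*e - i*f - 2) * (i*e - i*f + 2)"
  by (simp add: ns)
lemma sB: "(- h - 2) * (2 - h) = (h - 2) * (h + 2)"
  by (simp add: ns)
lemma sC: "(i * (i * f) + i * (i * e) - 2) * (i * (i * f) + i * (i * e) + 2) = (e + f - 2) * (e + f + 2)"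
  by (simp add: ns)
lemma sD: "(2 - h) * (i * e * (i * e)) - (- h - 2) * (i * f * (i * f)) = - ((h + 2) * (f * f) - (h - 2) * (e * e))"
  by (simp add: ns)
lemma tA: "c * (h - i * e - i * f) + c * (h + i * e + i * f) = h"
  by (simp add: ns)
lemma tC: "i * (c * (h - i * e - i * f)) - i * (c * (h + i * e + i * f)) = e + f"
  by (simp add: ns)
lemma tD: "(i * e - i * f + 2) * (c * (h + i * e + i * f) * (c * (h + i * e + i * f))) -
         (i * e - i * f - 2) * (c * (h - i * e - i * f) * (c * (h - i * e - i * f)))
       = (h + 2) * (f * f) - (h - 2) * (e * e)"
  by (simp add: ns)
lemma sA2: "(i*f + - (i*e) - 2) * (i*f + - (i*e) + 2) = (i*e - i*f - 2) * (i*e - i*f + 2)"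
  by (simp add: ns)
lemma sB2: "(- h - 2) * (- h + 2) = (h - 2) * (h + 2)"
  by (simp add: ns)
lemma sC2: "(i*(i*f) - - (i*(i*e)) - 2) * (i*(i*f) - - (i*(i*e)) + 2) = (e+f-2)*(e+f+2)"
  by (simp add: ns)
lemma sD2: "-((- h + 2) * (- (i*e) * (i*e))) - (- h - 2) * (i*f*(i*f)) = - ((h+2)*(f*f) - (h-2)*(e*e))"
  by (simp add: ns)
lemma rs1: "i * f * h - h * (i * f) = 2 * (i * f)" by (simp add: ns)
lemma rs2: "h * (i * e) - i * e * h = 2 * (i * e)" by (simp add: ns)
lemma rs3: "i * e * (i * f) - i * f * (i * e) + h = 0" by (simp add: ns)
lemma rt1: "(i * e - i * f) * (c * (h - i * e - i * f)) - c * (h - i * e - i * f) * (i * e - i * f) =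
        2 * (c * (h - i * e - i * f))" by (simp add: ns)
lemma rt2: "(i * e - i * f) * (c * (h + i * e + i * f)) - c * (h + i * e + i * f) * (i * e - i * f) +
        2 * (c * (h + i * e + i * f)) = 0" by (simp add: ns)
lemma rt3: "c * (h - i * e - i * f) * (c * (h + i * e + i * f)) - c * (h + i * e + i * f) * (c * (h - i * e - i * f)) =
        i * e - i * f" by (simp add: ns)
end

definition eE :: U where "eE = absU E"
definition eF :: U where "eF = absU F"
definition eH :: U where "eH = absU H"
definition II :: U where "II = cs \<i>"
definition c2 :: U where "c2 = cs (1/2)"
definition c16 :: U where "c16 = cs (1/16)"
definition c64 :: U where "c64 = cs (1/64)"

lemma absU_pvar_simps[simp]: "absU E = eE" "absU F = eF" "absU H = eH"
  by (simp_all add: eE_def eF_def eH_def)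

lemma cs_simps[simp]: "cs \<i> = II" "cs (-\<i>) = - II" "cs (1/2) = c2" "cs (1/16) = c16" "cs (1/64) = c64"
  "cs (-1) = -1" "cs (-2) = -2"
  by (simp_all add: II_def c2_def c16_def c64_def cs_uminus)

lemmas absU_ops = absU_padd absU_psub absU_pmul absU_pscale absU_pconst
lemmas evU_ops = evU_padd evU_psub evU_pmul evU_pscale evU_pconst evU_pvar

lemma absU_rel0: "r \<in> relsU \<Longrightarrow> absU r = 0"
proof -
  assume r: "r \<in> relsU"
  have "psub r (pconst 0) = r" by (simp add: fun_eq_iff psub_def pconst_def)
  then have "psub r (pconst 0) \<in> idealU" using r by (simp add: idealU_def ideal_gen.gen)
  then show ?thesis using r relsU_ncpoly absU_eq_iff[of r "pconst 0"] by (simp add: absU_pconst)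
qed

lemma relHE: "eH * eE - eE * eH - 2 * eE = 0"
  using absU_rel0[of "psub (pcomm H E) (pscale 2 E)"] by (simp add: relsU_def pcomm_def absU_ops)
lemma relHF: "eH * eF - eF * eH + 2 * eF = 0"
  using absU_rel0[of "padd (pcomm H F) (pscale 2 F)"] by (simp add: relsU_def pcomm_def absU_ops)
lemma relEF: "eE * eF - eF * eE - eH = 0"
  using absU_rel0[of "psub (pcomm E F) H"] by (simp add: relsU_def pcomm_def absU_ops)

lemma g1: "(a::'a::ab_group_add) - b - c = 0 \<Longrightarrow> a = b + c" by (simp add: diff_diff_eq)
lemma g2: "(a::'a::ab_group_add) - b - c = 0 \<Longrightarrow> b = a - c" by (metis add.commute diff_add_cancel diff_diff_eq eq_iff_diff_eq_0)
lemma g3: "(a::'a::ab_group_add) - b + c = 0 \<Longrightarrow> b = a + c" by (metis add_diff_eq diff_add_eq eq_iff_diff_eq_0 add.commute diff_add_cancel)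

lemma II_II: "II * II = -1"
proof -
  have "II * II = cs (\<i> * \<i>)" unfolding II_def by (rule cs_mult[symmetric])
  then show ?thesis by simp
qed


lemma c2_c2: "c2 + c2 = 1"
proof -
  have "c2 + c2 = cs (1/2 + 1/2)" unfolding c2_def by (rule cs_add[symmetric])
  then show ?thesis by simp
qed

interpretation UU: sl2r eE eF eH II c2
proof
  show "II * II = -1" by (rule II_II)
  show "eE * II = II * eE" "eF * II = II * eF" "eH * II = II * eH" unfolding II_def by (rule cs_central[symmetric])+
  show "eH * eE = eE * eH + 2 * eE" using relHE by (rule g1)
  show "eF * eE = eE * eF - eH" using relEF by (rule g2)
  show "eF * eH = eH * eF + 2 * eF" using relHF by (rule g3)
  show "c2 * x = x * c2" for x unfolding c2_def by (rule cs_central)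
  show "c2 + c2 = 1" by (rule c2_c2)
qed


lemma rels_ok: "r \<in> relsU \<Longrightarrow> evU (\<lambda>y. absU (actU_gen h y)) r = 0"
  apply (cases h)
  apply (auto simp add: relsU_def pcomm_def actU_gen_def evU_ops absU_ops)
  apply (simp_all only: UU.rs1 UU.rs2 UU.rs3 UU.rt1 UU.rt2 UU.rt3)
  done

lemma ev_sharp:
  "evU f (sharp_gen gA) = c16 * ((f gE + f gF - 2) * (f gE + f gF + 2))"
  "evU f (sharp_gen gB) = c16 * ((f gH - 2) * (f gH + 2))"
  "evU f (sharp_gen gC) = c16 * ((II * f gE - II * f gF - 2) * (II * f gE - II * f gF + 2))"
  "evU f (sharp_gen gD) = c64 * ((f gH + 2) * (f gF * f gF) - (f gH - 2) * (f gE * f gE))"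
  by (simp_all add: sharp_gen_def evU_ops)

lemma f_sigma: "absU (actU_gen sigma gE) = II * eF" "absU (actU_gen sigma gF) = - (II * eE)"
  "absU (actU_gen sigma gH) = - eH"
  by (simp_all add: actU_gen_def absU_ops)
lemma f_tau: "absU (actU_gen tau gE) = c2 * (eH - II * eE - II * eF)"
  "absU (actU_gen tau gF) = c2 * (eH + II * eE + II * eF)"
  "absU (actU_gen tau gH) = II * eE - II * eF"
  by (simp_all add: actU_gen_def absU_ops)

lemma pprod_map_pvar: "pprod (map pvar w) = mon w"
proof (induction w)
  case Nil then show ?case by (simp add: fun_eq_iff mon_def pconst_def)
next
  case (Cons x w)
  have "pvar x = mon [x]" by (simp add: fun_eq_iff mon_def pvar_def)
  then show ?case using Cons by (simp add: pmul_mono)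
qed

lemma psubst_pvar: "ncpoly p \<Longrightarrow> psubst pvar p = p"
  unfolding psubst_fsum pprod_map_pvar by (rule ncpoly_expand[symmetric])

lemma absU_as_ev: "ncpoly p \<Longrightarrow> absU p = evU (\<lambda>y. absU (pvar y)) p"
proof -
  assume p: "ncpoly p"
  have "absU p = absU (psubst pvar p)" using psubst_pvar[OF p] by simp
  also have "\<dots> = evU (\<lambda>y. absU (pvar y)) p" by (rule absU_psubst[OF p]) simp
  finally show ?thesis .
qed

lemma sharp_gen_ncpoly[simp]: "ncpoly (sharp_gen x)"
  by (cases x) (simp_all add: sharp_gen_def)
lemma actU_gen_ncpoly[simp]: "ncpoly (actU_gen h y)"
  by (cases h; cases y) (simp_all add: actU_gen_def)
lemma actR_gen_ncpoly[simp]: "ncpoly (actR_gen h y)"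
  by (cases h; cases y) (simp_all add: actR_gen_def)

lemma sharp_vals:
  "absU (sharp_gen gA) = c16 * ((eE + eF - 2) * (eE + eF + 2))"
  "absU (sharp_gen gB) = c16 * ((eH - 2) * (eH + 2))"
  "absU (sharp_gen gC) = c16 * ((II * eE - II * eF - 2) * (II * eE - II * eF + 2))"
  "absU (sharp_gen gD) = c64 * ((eH + 2) * (eF * eF) - (eH - 2) * (eE * eE))"
  by (simp_all only: absU_as_ev[OF sharp_gen_ncpoly] ev_sharp absU_pvar_simps)

lemma gens_ok: "evU (\<lambda>y. absU (actU_gen h y)) (sharp_gen x) = evU (\<lambda>y. absU (sharp_gen y)) (actR_gen h x)"
  apply (cases h; cases x)
  apply (simp_all only: ev_sharp f_sigma f_tau D3gen.case genR.case actR_gen_def evU_pvar evU_pscale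
     ncpoly_pvar sharp_vals cs_simps)
  apply (simp_all only: UU.sA2 UU.sB2 UU.sC2 UU.sD2 UU.tA UU.tC UU.tD mult_minus_right mult_minus1)
  done

lemma ncpoly_actU: "ncpoly p \<Longrightarrow> ncpoly (actU g p)"
  by (induction g) auto
lemma ncpoly_actR: "ncpoly p \<Longrightarrow> ncpoly (actR g p)"
  by (induction g) auto
lemma ncpoly_sharp: "ncpoly p \<Longrightarrow> ncpoly (sharp p)"
  by (simp add: sharp_def)

lemma step: "ncpoly q \<Longrightarrow> absU (psubst (actU_gen h) (sharp q)) = absU (sharp (psubst (actR_gen h) q))"
proof -
  assume q: "ncpoly q"
  have "absU (psubst (actU_gen h) (sharp q)) = evU (\<lambda>y. absU (actU_gen h y)) (psubst sharp_gen q)"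
    using q by (simp add: absU_psubst sharp_def)
  also have "\<dots> = evU (\<lambda>x. evU (\<lambda>y. absU (actU_gen h y)) (sharp_gen x)) q"
    by (rule evU_psubst[OF q]) simp
  also have "\<dots> = evU (\<lambda>x. evU (\<lambda>y. absU (sharp_gen y)) (actR_gen h x)) q"
    by (simp only: gens_ok)
  also have "\<dots> = evU (\<lambda>y. absU (sharp_gen y)) (psubst (actR_gen h) q)"
    by (rule evU_psubst[OF q, symmetric]) simp
  also have "\<dots> = absU (sharp (psubst (actR_gen h) q))"
    using q by (simp add: sharp_def absU_psubst)
  finally show ?thesis .
qed

lemma main: "ncpoly p \<Longrightarrow> absU (actU g (sharp p)) = absU (sharp (actR g p))"
proof (induction g)
  case Nil then show ?case by simp
next
  case (Cons h gs)
  have n1: "ncpoly (actU gs (sharp p))" using Cons.prems by (simp add: ncpoly_actU ncpoly_sharp)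
  have n2: "ncpoly (sharp (actR gs p))" using Cons.prems by (simp add: ncpoly_actR ncpoly_sharp)
  have "absU (actU (h # gs) (sharp p)) = evU (\<lambda>y. absU (actU_gen h y)) (actU gs (sharp p))"
    using n1 by (simp add: absU_psubst)
  also have "\<dots> = evU (\<lambda>y. absU (actU_gen h y)) (sharp (actR gs p))"
    by (rule evU_respect[OF rels_ok n1 n2 Cons.IH[OF Cons.prems]])
  also have "\<dots> = absU (psubst (actU_gen h) (sharp (actR gs p)))"
    using n2 by (simp add: absU_psubst)
  also have "\<dots> = absU (sharp (actR (h # gs) p))"
    using Cons.prems by (simp add: step ncpoly_actR)
  finally show ?case .
qed

theorem theorem3p2:
  fixes g :: "D3gen list" and p :: "genR ncp"
  assumes "ncpoly p"
  shows "psub (actU g (sharp p)) (sharp (actR g p)) \<in> idealU"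
  using main[OF assms, of g] absU_eq_iff ncpoly_actU ncpoly_actR ncpoly_sharp assms by blast

end
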